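(* Let $\Gamma=\langle V,(w_u)_{u\in V},\alpha,\beta\rangle$ be a star celebrity game with $\beta>1$ and $n=|V|$, and let $G$ be a Nash equilibrium graph of $\Gamma$. If there is $v\in V$ with $\max_{x\in V}d_G(v,x)\le\beta-1$, then $$W(G,\beta)=\sum_{u\in V}\ \sum_{x:\,d_G(u,x)>\beta}w_x\ \le\ \alpha(n-1).$$
   Context: A celebrity game $\Gamma=\langle V,(w_u)_{u\in V},\alpha,\beta\rangle$ consists of a set of players $V=\{1,\dots,n\}$, celebrity weights $w_u>0$, a link cost $\alpha>0$ and a critical distance $\beta$ with $1\le\beta\le n-1$. A strategy of player $u$ is a set $S_u\subseteq V\setminus\{u\}$; a strategy profile is $S=(S_1,\dots,S_n)$; its outcome graph $G[S]$ is the undirected graph on $V$ with edge set $\{\{u,v\}: u\in S_v\text{ or }v\in S_u\}$. With $d_G$ the graph distance (infinite between different connected components), the cost of player $u$ is $c_u(S)=\alpha|S_u|+\sum_{v:\,d_{G[S]}(u,v)>\beta}w_v$. $S$ is a Nash equilibrium if no player can strictly decrease its cost by changing only its own strategy; a graph $G$ is a Nash equilibrium graph if $G=G[S]$ for some Nash equilibrium $S$. $\Gamma$ is a star celebrity game if it has a Nash equilibrium graph that is connected. *)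

theory Defs
  imports Main "HOL-Library.Extended_Nat"
begin

text \<open>Players are V = {1..n}. A strategy profile is S :: nat => nat set, where S u is the
  set of players u buys links to. A graph on V is given by an adjacency relation.\<close>

definition players :: "nat \<Rightarrow> nat set" where
  "players n = {1..n}"

definition valid_profile :: "nat \<Rightarrow> (nat \<Rightarrow> nat set) \<Rightarrow> bool" where
  "valid_profile n S \<longleftrightarrow> (\<forall>u\<in>players n. S u \<subseteq> players n - {u})"

definition outcome :: "nat \<Rightarrow> (nat \<Rightarrow> nat set) \<Rightarrow> nat \<Rightarrow> nat \<Rightarrow> bool" where
  "outcome n S = (\<lambda>u v. u \<in> players n \<and> v \<in> players n \<and> (u \<in> S v \<or> v \<in> S u))"

text \<open>A walk of length k from u to v: list of k+1 vertices with consecutive ones adjacent.\<close>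
definition walk :: "(nat \<Rightarrow> nat \<Rightarrow> bool) \<Rightarrow> nat list \<Rightarrow> nat \<Rightarrow> nat \<Rightarrow> bool" where
  "walk G p u v \<longleftrightarrow> p \<noteq> [] \<and> hd p = u \<and> last p = v \<and>
     (\<forall>i. Suc i < length p \<longrightarrow> G (p ! i) (p ! Suc i))"

text \<open>Graph distance (infinite if no walk exists), restricted to vertices of V.\<close>
definition gdist :: "nat \<Rightarrow> (nat \<Rightarrow> nat \<Rightarrow> bool) \<Rightarrow> nat \<Rightarrow> nat \<Rightarrow> enat" where
  "gdist n G u v = (INF k \<in> {k. \<exists>p. walk G p u v \<and> length p = Suc k \<and> set p \<subseteq> players n}. enat k)"

definition cost :: "nat \<Rightarrow> (nat \<Rightarrow> real) \<Rightarrow> real \<Rightarrow> nat \<Rightarrow> (nat \<Rightarrow> nat set) \<Rightarrow> nat \<Rightarrow> real" where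
  "cost n w \<alpha> \<beta> S u = \<alpha> * real (card (S u)) +
     (\<Sum>v\<in>{v\<in>players n. gdist n (outcome n S) u v > enat \<beta>}. w v)"

definition celebrity_game :: "nat \<Rightarrow> (nat \<Rightarrow> real) \<Rightarrow> real \<Rightarrow> nat \<Rightarrow> bool" where
  "celebrity_game n w \<alpha> \<beta> \<longleftrightarrow> (\<forall>u\<in>players n. w u > 0) \<and> \<alpha> > 0 \<and> 1 \<le> \<beta> \<and> \<beta> + 1 \<le> n"

definition nash_eq :: "nat \<Rightarrow> (nat \<Rightarrow> real) \<Rightarrow> real \<Rightarrow> nat \<Rightarrow> (nat \<Rightarrow> nat set) \<Rightarrow> bool" where
  "nash_eq n w \<alpha> \<beta> S \<longleftrightarrow> valid_profile n S \<and>
     (\<forall>u\<in>players n. \<forall>T. T \<subseteq> players n - {u} \<longrightarrow> cost n w \<alpha> \<beta> S u \<le> cost n w \<alpha> \<beta> (S(u := T)) u)"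

definition nash_graph :: "nat \<Rightarrow> (nat \<Rightarrow> real) \<Rightarrow> real \<Rightarrow> nat \<Rightarrow> (nat \<Rightarrow> nat \<Rightarrow> bool) \<Rightarrow> bool" where
  "nash_graph n w \<alpha> \<beta> G \<longleftrightarrow> (\<exists>S. nash_eq n w \<alpha> \<beta> S \<and> G = outcome n S)"

definition graph_connected :: "nat \<Rightarrow> (nat \<Rightarrow> nat \<Rightarrow> bool) \<Rightarrow> bool" where
  "graph_connected n G \<longleftrightarrow> (\<forall>u\<in>players n. \<forall>v\<in>players n. gdist n G u v < \<infinity>)"

definition star_celebrity_game :: "nat \<Rightarrow> (nat \<Rightarrow> real) \<Rightarrow> real \<Rightarrow> nat \<Rightarrow> bool" where
  "star_celebrity_game n w \<alpha> \<beta> \<longleftrightarrow> celebrity_game n w \<alpha> \<beta> \<and>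
     (\<exists>G. nash_graph n w \<alpha> \<beta> G \<and> graph_connected n G)"

definition W :: "nat \<Rightarrow> (nat \<Rightarrow> real) \<Rightarrow> (nat \<Rightarrow> nat \<Rightarrow> bool) \<Rightarrow> nat \<Rightarrow> real" where
  "W n w G \<beta> = (\<Sum>u\<in>players n. \<Sum>x\<in>{x\<in>players n. gdist n G u x > enat \<beta>}. w x)"

end

theory Submission
  imports Defs
begin

lemma gdist_le_obtain:
  assumes "gdist n G u x \<le> enat m"
  shows "\<exists>k p. walk G p u x \<and> length p = Suc k \<and> set p \<subseteq> players n \<and> k \<le> m"
proof (rule ccontr)
  assume H: "\<not> ?thesis"
  have "enat (Suc m) \<le> gdist n G u x"
    unfolding gdist_def
  proof (rule INF_greatest)
    fix k assume "k \<in> {k. \<exists>p. walk G p u x \<and> length p = Suc k \<and> set p \<subseteq> players n}"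
    with H have "\<not> k \<le> m" by blast
    then show "enat (Suc m) \<le> enat k" by simp
  qed
  from order_trans[OF this assms] show False by simp
qed

lemma gdist_le_walk:
  assumes "walk G p u x" "length p = Suc k" "set p \<subseteq> players n"
  shows "gdist n G u x \<le> enat k"
  unfolding gdist_def by (rule INF_lower) (use assms in blast)

lemma walk_mono:
  assumes "walk G p a b" "\<And>x y. G x y \<Longrightarrow> G' x y"
  shows "walk G' p a b"
  using assms unfolding walk_def by blast

lemma walk_cons:
  assumes "walk G p a b" "G u a"
  shows "walk G (u # p) u b"
  unfolding walk_def
proof (intro conjI allI impI)
  fix i assume "Suc i < length (u # p)"
  then show "G ((u # p) ! i) ((u # p) ! Suc i)"
    using assms unfolding walk_def
    by (cases i) (auto simp: hd_conv_nth)
qed (use assms in \<open>auto simp: walk_def\<close>)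

theorem lemma3:
  fixes n \<beta> :: nat and w :: "nat \<Rightarrow> real" and \<alpha> :: real
    and G :: "nat \<Rightarrow> nat \<Rightarrow> bool" and v :: nat
  assumes "star_celebrity_game n w \<alpha> \<beta>"
    and "\<beta> > 1"
    and "nash_graph n w \<alpha> \<beta> G"
    and "v \<in> players n"
    and "\<forall>x\<in>players n. gdist n G v x \<le> enat (\<beta> - 1)"
  shows "W n w G \<beta> \<le> \<alpha> * (real n - 1)"
proof -
  obtain S where NE: "nash_eq n w \<alpha> \<beta> S" and GS: "G = outcome n S"
    using assms(3) unfolding nash_graph_def by blast
  have fin: "finite (players n)" by (simp add: players_def)
  have cardp: "card (players n) = n" by (simp add: players_def)
  define f where "f u = (\<Sum>x\<in>{x\<in>players n. gdist n G u x > enat \<beta>}. w x)" for u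
  have fv: "f v = 0"
  proof -
    have "{x\<in>players n. gdist n G v x > enat \<beta>} = {}"
    proof safe
      fix x assume xx: "x \<in> players n" and lt: "enat \<beta> < gdist n G v x"
      have "gdist n G v x \<le> enat (\<beta> - 1)" using assms(5) xx by blast
      with lt have "enat \<beta> < enat (\<beta> - 1)" by (rule order_less_le_trans)
      then show "x \<in> {}" by simp
    qed
    then show ?thesis unfolding f_def by (metis sum.empty)
  qed
  have fu: "f u \<le> \<alpha>" if u: "u \<in> players n" "u \<noteq> v" for u
  proof -
    have valid: "S u \<subseteq> players n - {u}"
      using NE u unfolding nash_eq_def valid_profile_def by blast
    define T where "T = insert v (S u)"
    have T: "T \<subseteq> players n - {u}" using valid u assms(4) by (auto simp: T_def)
    define S' where "S' = S(u := T)"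
    have le: "cost n w \<alpha> \<beta> S u \<le> cost n w \<alpha> \<beta> S' u"
      using NE u T unfolding nash_eq_def S'_def by blast
    have finS: "finite (S u)" using valid fin finite_subset by blast
    have cardT: "real (card T) \<le> real (card (S u)) + 1"
      unfolding T_def using finS by (simp add: card_insert_if)
    have mono: "\<And>a b. G a b \<Longrightarrow> outcome n S' a b"
      unfolding GS outcome_def S'_def T_def by auto
    have uv: "outcome n S' u v" unfolding outcome_def S'_def T_def using u assms(4) by auto
    have empty: "{x\<in>players n. gdist n (outcome n S') u x > enat \<beta>} = {}"
    proof safe
      fix x assume x: "x \<in> players n" "enat \<beta> < gdist n (outcome n S') u x"
      have "gdist n G v x \<le> enat (\<beta> - 1)" using assms(5) x(1) by blast
      then obtain k p where p: "walk G p v x" "length p = Suc k" "set p \<subseteq> players n" "k \<le> \<beta> - 1"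
        using gdist_le_obtain by blast
      have "walk (outcome n S') (u # p) u x"
      proof -
        have "walk (outcome n S') p v x" using walk_mono[OF p(1)] mono by blast
        then show ?thesis using walk_cons uv by blast
      qed
      then have "gdist n (outcome n S') u x \<le> enat (Suc k)"
        by (rule gdist_le_walk) (use p u in auto)
      also have "\<dots> \<le> enat \<beta>" using p(4) assms(2) by simp
      finally show "x \<in> {}" using x(2) by simp
    qed
    have "cost n w \<alpha> \<beta> S' u = \<alpha> * real (card T)"
      unfolding cost_def empty by (simp add: S'_def)
    moreover have "cost n w \<alpha> \<beta> S u = \<alpha> * real (card (S u)) + f u"
      unfolding cost_def f_def GS by simp
    moreover have "\<alpha> > 0" using assms(1) unfolding star_celebrity_game_def celebrity_game_def by blast
    ultimately have "\<alpha> * real (card (S u)) + f u \<le> \<alpha> * real (card T)" using le by simp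
    also have "\<dots> \<le> \<alpha> * (real (card (S u)) + 1)"
      using cardT \<open>\<alpha> > 0\<close> by (simp add: mult_left_mono)
    finally show ?thesis by (simp add: algebra_simps)
  qed
  have "W n w G \<beta> = (\<Sum>u\<in>players n. f u)" by (simp add: W_def f_def)
  also have "\<dots> = f v + (\<Sum>u\<in>players n - {v}. f u)"
    using fin assms(4) by (simp add: sum.remove)
  also have "\<dots> \<le> 0 + (\<Sum>u\<in>players n - {v}. \<alpha>)"
    using fv fu by (intro add_mono sum_mono) auto
  also have "\<dots> = \<alpha> * (real n - 1)"
  proof -
    have "n \<ge> 1" using assms(4) by (simp add: players_def)
    then show ?thesis using fin assms(4) cardp by (simp add: card_Diff_singleton of_nat_diff)
  qed
  finally show ?thesis .
qed

end
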